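(* Let $\mathcal M=(M,<,+,0,\ldots)$ be a definably complete locally o-minimal expansion of an ordered abelian group. Let $C\subseteq M^m$ and $P\subseteq M^n$ be definable sets with $C$ closed and bounded, and let $f:C\times P\to M$ be a definable function. Then $f$ is equi-continuous with respect to $P$ if and only if it is uniformly equi-continuous with respect to $P$.
   Context: Definable = with parameters. Definably complete: every definable subset of $M$ has sup and inf in $M\cup\{\pm\infty\}$. Locally o-minimal: for every definable $X\subseteq M$ and $a\in M$ there is an open interval $I\ni a$ with $X\cap I$ a finite union of points and open intervals. $|x|=\max_i|x_i|$. $f$ is equi-continuous w.r.t. $P$ if $\forall\varepsilon>0\ \forall x\in C\ \exists\delta>0\ \forall p\in P\ \forall x'\in C$: $|x-x'|<\delta\Rightarrow|f(x,p)-f(x',p)|<\varepsilon$. It is uniformly equi-continuous w.r.t. $P$ if $\forall\varepsilon>0\ \exists\delta>0\ \forall p\in P\ \forall x,x'\in C$: $|x-x'|<\delta\Rightarrow|f(x,p)-f(x',p)|<\varepsilon$. *)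

theory Defs
  imports Main
begin

text \<open>Points of M^n are lists of length n.  A (first-order) expansion of an ordered
abelian group (M,<,+,0), with definability allowing parameters, is represented in the
standard way (van den Dries) by the family S of its definable sets:
S n = the definable subsets of M^n.\<close>

definition definable_structure :: "(nat \<Rightarrow> ('a::linordered_ab_group_add) list set set) \<Rightarrow> bool" where
  "definable_structure S \<longleftrightarrow>
     (\<forall>n. \<forall>A\<in>S n. A \<subseteq> {xs. length xs = n})
   \<and> (\<forall>n. {xs. length xs = n} \<in> S n)
   \<and> (\<forall>n. \<forall>A\<in>S n. \<forall>B\<in>S n. A \<union> B \<in> S n \<and> A - B \<in> S n)
   \<and> (\<forall>n. \<forall>A\<in>S n. {x @ [a] | x a. x \<in> A} \<in> S (Suc n) \<and> {a # x | x a. x \<in> A} \<in> S (Suc n))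
   \<and> (\<forall>n i j. i < n \<and> j < n \<longrightarrow> {xs. length xs = n \<and> xs ! i = xs ! j} \<in> S n)
   \<and> (\<forall>n. \<forall>A\<in>S (Suc n). butlast ` A \<in> S n)
   \<and> {[x, y] | x y. x < y} \<in> S 2
   \<and> {[x, y, z] | x y z. z = x + y} \<in> S 3
   \<and> (\<forall>a. {[a]} \<in> S 1)"

text \<open>Definable completeness: every definable subset of M has sup and inf in M \<union> {\<plusminus>\<infinity>}.
(Sup = -\<infinity> for the empty set and +\<infinity> for sets unbounded above, so the condition is
that nonempty sets bounded above have a least upper bound; dually for inf.)\<close>

definition definably_complete :: "(nat \<Rightarrow> ('a::linordered_ab_group_add) list set set) \<Rightarrow> bool" where
  "definably_complete S \<longleftrightarrow>
     (\<forall>X\<in>S 1. let X' = {x. [x] \<in> X} in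
        (X' \<noteq> {} \<and> (\<exists>u. \<forall>x\<in>X'. x \<le> u) \<longrightarrow>
           (\<exists>s. (\<forall>x\<in>X'. x \<le> s) \<and> (\<forall>u. (\<forall>x\<in>X'. x \<le> u) \<longrightarrow> s \<le> u)))
      \<and> (X' \<noteq> {} \<and> (\<exists>l. \<forall>x\<in>X'. l \<le> x) \<longrightarrow>
           (\<exists>s. (\<forall>x\<in>X'. s \<le> x) \<and> (\<forall>l. (\<forall>x\<in>X'. l \<le> x) \<longrightarrow> l \<le> s))))"

definition locally_o_minimal :: "(nat \<Rightarrow> ('a::linordered_ab_group_add) list set set) \<Rightarrow> bool" where
  "locally_o_minimal S \<longleftrightarrow>
     (\<forall>X\<in>S 1. \<forall>a. \<exists>b c. b < a \<and> a < c \<and>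
        (\<exists>F J. finite F \<and> finite J \<and>
           {x. [x] \<in> X} \<inter> {b<..<c} = F \<union> (\<Union>(u, v)\<in>J. {u<..<v})))"

definition gabs :: "('a::linordered_ab_group_add) \<Rightarrow> 'a" where
  "gabs x = max x (- x)"

definition lnorm :: "('a::linordered_ab_group_add) list \<Rightarrow> 'a" where
  "lnorm xs = Max (insert 0 (set (map gabs xs)))"

definition ldist :: "('a::linordered_ab_group_add) list \<Rightarrow> 'a list \<Rightarrow> 'a" where
  "ldist xs ys = lnorm (map2 (-) xs ys)"

definition closed_in_power :: "nat \<Rightarrow> ('a::linordered_ab_group_add) list set \<Rightarrow> bool" where
  "closed_in_power m C \<longleftrightarrow>
     (\<forall>x. length x = m \<and> (\<forall>e>0. \<exists>y\<in>C. ldist x y < e) \<longrightarrow> x \<in> C)"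

definition bounded_in_power :: "('a::linordered_ab_group_add) list set \<Rightarrow> bool" where
  "bounded_in_power C \<longleftrightarrow> (\<exists>B. \<forall>x\<in>C. lnorm x \<le> B)"

definition equi_continuous ::
  "('a::linordered_ab_group_add) list set \<Rightarrow> 'a list set \<Rightarrow> ('a list \<Rightarrow> 'a list \<Rightarrow> 'a) \<Rightarrow> bool" where
  "equi_continuous C P f \<longleftrightarrow>
     (\<forall>e>0. \<forall>x\<in>C. \<exists>d>0. \<forall>p\<in>P. \<forall>x'\<in>C. ldist x x' < d \<longrightarrow> gabs (f x p - f x' p) < e)"

definition uniformly_equi_continuous ::
  "('a::linordered_ab_group_add) list set \<Rightarrow> 'a list set \<Rightarrow> ('a list \<Rightarrow> 'a list \<Rightarrow> 'a) \<Rightarrow> bool" where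
  "uniformly_equi_continuous C P f \<longleftrightarrow>
     (\<forall>e>0. \<exists>d>0. \<forall>p\<in>P. \<forall>x\<in>C. \<forall>x'\<in>C. ldist x x' < d \<longrightarrow> gabs (f x p - f x' p) < e)"

end

theory Submission
  imports Defs
begin

lemma gabs_less: "gabs (x::'a::linordered_ab_group_add) < r \<longleftrightarrow> x < r \<and> - x < r"
  by (simp add: gabs_def)

lemma gabs_le: "gabs (x::'a::linordered_ab_group_add) \<le> r \<longleftrightarrow> x \<le> r \<and> - x \<le> r"
  by (simp add: gabs_def)

lemma gabs_nonneg: "0 \<le> gabs (x::'a::linordered_ab_group_add)"
  unfolding gabs_def by (cases "0 \<le> x") (auto simp: max_def)

lemma gabs_diff_less: "gabs ((a::'a::linordered_ab_group_add) - b) < r \<longleftrightarrow> a < r + b \<and> b < r + a"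
  unfolding gabs_less by (auto simp: algebra_simps less_diff_eq diff_less_eq)

lemma gabs_sym: "gabs ((a::'a::linordered_ab_group_add) - b) = gabs (b - a)"
  unfolding gabs_def by (simp add: max.commute)

lemma gabs_tri: "gabs ((a::'a::linordered_ab_group_add) - c) \<le> gabs (a - b) + gabs (b - c)"
proof -
  have "a - c = (a - b) + (b - c)" by (simp add: algebra_simps)
  moreover have "\<And>x y::'a. gabs (x + y) \<le> gabs x + gabs y"
  proof -
    fix x y :: 'a
    have "x \<le> gabs x" "- x \<le> gabs x" "y \<le> gabs y" "- y \<le> gabs y" by (auto simp: gabs_def)
    then have "x + y \<le> gabs x + gabs y" "- (x + y) \<le> gabs x + gabs y"
      using add_mono[of "- x" "gabs x" "- y" "gabs y"] by (auto simp: add_mono)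
    then show "gabs (x + y) \<le> gabs x + gabs y" by (simp add: gabs_le)
  qed
  ultimately show ?thesis by metis
qed

lemma lnorm_less: "lnorm (xs::'a::linordered_ab_group_add list) < r \<longleftrightarrow> 0 < r \<and> (\<forall>i<length xs. gabs (xs!i) < r)"
  unfolding lnorm_def by (auto simp: in_set_conv_nth) (metis nth_mem)

lemma lnorm_ge: "i < length xs \<Longrightarrow> gabs (xs!i) \<le> lnorm (xs::'a::linordered_ab_group_add list)"
  unfolding lnorm_def by (rule Max_ge) (auto simp: image_iff)

lemma ldist_less: "length x = length y \<Longrightarrow>
  ldist (x::'a::linordered_ab_group_add list) y < r \<longleftrightarrow> 0 < r \<and> (\<forall>i<length x. gabs (x!i - y!i) < r)"
  unfolding ldist_def lnorm_less by auto

lemma ldist_ge: "length x = length y \<Longrightarrow> i < length x \<Longrightarrow>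
  gabs (x!i - y!i) \<le> ldist (x::'a::linordered_ab_group_add list) y"
  unfolding ldist_def using lnorm_ge[of i "map2 (-) x y"] by auto

lemma ldist_cons_less: "length x = length y \<Longrightarrow>
  ldist ((a::'a::linordered_ab_group_add) # x) (b # y) < r \<longleftrightarrow> gabs (a - b) < r \<and> ldist x y < r"
  by (auto simp: ldist_less less_Suc_eq_0_disj nth_Cons' gabs_less)

lemma ldist_tri: "length x = length y \<Longrightarrow> length y = length z \<Longrightarrow>
  ldist (x::'a::linordered_ab_group_add list) y < a \<Longrightarrow> ldist y z < b \<Longrightarrow> ldist x z < a + b"
proof -
  assume l: "length x = length y" "length y = length z" and h: "ldist x y < a" "ldist y z < b"
  have "0 < a" "0 < b" using h l by (auto simp: ldist_less)
  then have "0 < a + b" by (simp add: add_pos_pos)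
  moreover have "\<forall>i<length x. gabs (x!i - z!i) < a + b"
  proof (intro allI impI)
    fix i assume i: "i < length x"
    have "gabs (x!i - z!i) \<le> gabs (x!i - y!i) + gabs (y!i - z!i)" by (rule gabs_tri)
    also have "\<dots> < a + b" using h l i by (intro add_strict_mono) (auto simp: ldist_less)
    finally show "gabs (x!i - z!i) < a + b" .
  qed
  ultimately show ?thesis using l by (simp add: ldist_less)
qed

section \<open>Definability combinators\<close>

definition Def :: "(nat \<Rightarrow> 'a list set set) \<Rightarrow> nat \<Rightarrow> ('a list \<Rightarrow> bool) \<Rightarrow> bool" where
  "Def S k \<phi> \<longleftrightarrow> {xs. length xs = k \<and> \<phi> xs} \<in> S k"

context
  fixes S :: "nat \<Rightarrow> ('a::linordered_ab_group_add) list set set"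
  assumes DS: "definable_structure S"
begin

lemma DS_len: "A \<in> S n \<Longrightarrow> xs \<in> A \<Longrightarrow> length xs = n"
    using DS[unfolded definable_structure_def, THEN conjunct1] by auto

lemma DS_univ: "{xs. length xs = n} \<in> S n"
    using DS[unfolded definable_structure_def, THEN conjunct2, THEN conjunct1] by auto

lemma DS_diff: "A \<in> S n \<Longrightarrow> B \<in> S n \<Longrightarrow> A - B \<in> S n"
    using DS[unfolded definable_structure_def, THEN conjunct2, THEN conjunct2, THEN conjunct1] by auto

lemma DS_cons: "A \<in> S n \<Longrightarrow> {a # x | x a. x \<in> A} \<in> S (Suc n)"
    using DS[unfolded definable_structure_def, THEN conjunct2, THEN conjunct2, THEN conjunct2, THEN conjunct1] by auto

lemma DS_diag: "i < n \<Longrightarrow> j < n \<Longrightarrow> {xs. length xs = n \<and> xs ! i = xs ! j} \<in> S n"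
    using DS[unfolded definable_structure_def, THEN conjunct2, THEN conjunct2, THEN conjunct2, THEN conjunct2, THEN conjunct1] by auto

lemma DS_butlast: "A \<in> S (Suc n) \<Longrightarrow> butlast ` A \<in> S n"
    using DS[unfolded definable_structure_def, THEN conjunct2, THEN conjunct2, THEN conjunct2, THEN conjunct2, THEN conjunct2, THEN conjunct1] by auto

lemma DS_lt: "{[x, y] | x y. x < y} \<in> S 2"
    using DS[unfolded definable_structure_def, THEN conjunct2, THEN conjunct2, THEN conjunct2, THEN conjunct2, THEN conjunct2, THEN conjunct2, THEN conjunct1] by auto

lemma DS_add: "{[x, y, z] | x y z. z = x + y} \<in> S 3"
    using DS[unfolded definable_structure_def, THEN conjunct2, THEN conjunct2, THEN conjunct2, THEN conjunct2, THEN conjunct2, THEN conjunct2, THEN conjunct2, THEN conjunct1] by auto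

lemma DS_const: "{[a]} \<in> S 1"
    using DS[unfolded definable_structure_def, THEN conjunct2, THEN conjunct2, THEN conjunct2, THEN conjunct2, THEN conjunct2, THEN conjunct2, THEN conjunct2, THEN conjunct2] by auto

lemma Def_cong: "Def S k \<phi> \<Longrightarrow> (\<And>xs. length xs = k \<Longrightarrow> \<phi> xs = \<psi> xs) \<Longrightarrow> Def S k \<psi>"
proof -
  assume "Def S k \<phi>" "\<And>xs. length xs = k \<Longrightarrow> \<phi> xs = \<psi> xs"
  moreover have "{xs. length xs = k \<and> \<phi> xs} = {xs. length xs = k \<and> \<psi> xs}" using calculation(2) by auto
  ultimately show ?thesis unfolding Def_def by simp
qed

lemma Def_True: "Def S k (\<lambda>_. True)"
  unfolding Def_def using DS_univ by simp

lemma Def_not: "Def S k \<phi> \<Longrightarrow> Def S k (\<lambda>xs. \<not> \<phi> xs)"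
  unfolding Def_def
proof -
  assume "{xs. length xs = k \<and> \<phi> xs} \<in> S k"
  moreover have "{xs. length xs = k} - {xs. length xs = k \<and> \<phi> xs} = {xs. length xs = k \<and> \<not> \<phi> xs}" by auto
  ultimately show "{xs. length xs = k \<and> \<not> \<phi> xs} \<in> S k" using DS_diff[OF DS_univ] by metis
qed

lemma Def_and: "Def S k \<phi> \<Longrightarrow> Def S k \<psi> \<Longrightarrow> Def S k (\<lambda>xs. \<phi> xs \<and> \<psi> xs)"
  unfolding Def_def
proof -
  assume a: "{xs. length xs = k \<and> \<phi> xs} \<in> S k" and b: "{xs. length xs = k \<and> \<psi> xs} \<in> S k"
  have "{xs. length xs = k \<and> \<phi> xs} - ({xs. length xs = k \<and> \<phi> xs} - {xs. length xs = k \<and> \<psi> xs})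
     = {xs. length xs = k \<and> \<phi> xs \<and> \<psi> xs}" by auto
  with DS_diff[OF a DS_diff[OF a b]] show "{xs. length xs = k \<and> \<phi> xs \<and> \<psi> xs} \<in> S k"
    by simp
qed

lemma Def_imp: "Def S k \<phi> \<Longrightarrow> Def S k \<psi> \<Longrightarrow> Def S k (\<lambda>xs. \<phi> xs \<longrightarrow> \<psi> xs)"
proof -
  assume "Def S k \<phi>" "Def S k \<psi>"
  from Def_not[OF Def_and[OF this(1) Def_not[OF this(2)]]]
  show ?thesis by (rule Def_cong) auto
qed

lemma Def_ex: "Def S (Suc k) \<phi> \<Longrightarrow> Def S k (\<lambda>xs. \<exists>a. \<phi> (xs @ [a]))"
  unfolding Def_def
proof -
  assume a: "{xs. length xs = Suc k \<and> \<phi> xs} \<in> S (Suc k)"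
  have "butlast ` {xs. length xs = Suc k \<and> \<phi> xs} = {xs. length xs = k \<and> (\<exists>a. \<phi> (xs @ [a]))}"
  proof (intro set_eqI iffI)
    fix xs assume "xs \<in> butlast ` {xs. length xs = Suc k \<and> \<phi> xs}"
    then obtain v where v: "length v = Suc k" "\<phi> v" "xs = butlast v" by auto
    have "v \<noteq> []" using v by auto
    then have "v = xs @ [last v]" using v(3) by simp
    then have "\<phi> (xs @ [last v])" using v(2) by simp
    then show "xs \<in> {xs. length xs = k \<and> (\<exists>a. \<phi> (xs @ [a]))}" using v by auto
  next
    fix xs assume "xs \<in> {xs. length xs = k \<and> (\<exists>a. \<phi> (xs @ [a]))}"
    then obtain a where "length xs = k" "\<phi> (xs @ [a])" by auto
    then show "xs \<in> butlast ` {xs. length xs = Suc k \<and> \<phi> xs}"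
      by (intro image_eqI[of _ _ "xs @ [a]"]) auto
  qed
  with DS_butlast[OF a] show "{xs. length xs = k \<and> (\<exists>a. \<phi> (xs @ [a]))} \<in> S k" by simp
qed

lemma Def_all: "Def S (Suc k) \<phi> \<Longrightarrow> Def S k (\<lambda>xs. \<forall>a. \<phi> (xs @ [a]))"
proof -
  assume "Def S (Suc k) \<phi>"
  from Def_not[OF Def_ex[OF Def_not[OF this]]]
  show ?thesis by (rule Def_cong) auto
qed

lemma Def_exs: "Def S (k + l) \<phi> \<Longrightarrow> Def S k (\<lambda>xs. \<exists>ys. length ys = l \<and> \<phi> (xs @ ys))"
proof (induction l arbitrary: \<phi>)
  case 0
  then show ?case by (simp cong: conj_cong)
next
  case (Suc l)
  have "Def S (Suc (k + l)) \<phi>" using Suc.prems by simp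
  from Suc.IH[OF Def_ex[OF this]]
  have "Def S k (\<lambda>xs. \<exists>ys. length ys = l \<and> (\<exists>a. \<phi> ((xs @ ys) @ [a])))" .
  then show ?case
  proof (rule Def_cong)
    fix xs :: "'a list"
    show "(\<exists>ys. length ys = l \<and> (\<exists>a. \<phi> ((xs @ ys) @ [a]))) = (\<exists>ys. length ys = Suc l \<and> \<phi> (xs @ ys))"
    proof
      assume "\<exists>ys. length ys = l \<and> (\<exists>a. \<phi> ((xs @ ys) @ [a]))"
      then obtain ys a where "length ys = l" "\<phi> ((xs @ ys) @ [a])" by blast
      then show "\<exists>ys. length ys = Suc l \<and> \<phi> (xs @ ys)" by (intro exI[of _ "ys @ [a]"]) simp
    next
      assume "\<exists>ys. length ys = Suc l \<and> \<phi> (xs @ ys)"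
      then obtain ys where y: "length ys = Suc l" "\<phi> (xs @ ys)" by blast
      then obtain zs a where "ys = zs @ [a]" by (metis length_Suc_conv_rev)
      then show "\<exists>ys. length ys = l \<and> (\<exists>a. \<phi> ((xs @ ys) @ [a]))" using y by auto
    qed
  qed
qed

lemma Def_alls: "Def S (k + l) \<phi> \<Longrightarrow> Def S k (\<lambda>xs. \<forall>ys. length ys = l \<longrightarrow> \<phi> (xs @ ys))"
proof -
  assume "Def S (k + l) \<phi>"
  from Def_not[OF Def_exs[OF Def_not[OF this]]]
  show ?thesis by (rule Def_cong) auto
qed

lemma Def_all_idx: "(\<And>i. i < (N::nat) \<Longrightarrow> Def S k (\<phi> i)) \<Longrightarrow> Def S k (\<lambda>xs. \<forall>i<N. \<phi> i xs)"
proof (induction N)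
  case 0
  then show ?case using Def_True by simp
next
  case (Suc N)
  have "Def S k (\<lambda>xs. (\<forall>i<N. \<phi> i xs) \<and> \<phi> N xs)"
    using Suc by (intro Def_and) auto
  then show ?case by (rule Def_cong) (auto simp: less_Suc_eq)
qed

lemma prepend_S: "B \<in> S l \<Longrightarrow> {v. length v = j + l \<and> drop j v \<in> B} \<in> S (j + l)"
proof (induction j)
  case 0
  have "{v. length v = 0 + l \<and> drop 0 v \<in> B} = B" using DS_len[OF 0] by auto
  then show ?case using 0 by simp
next
  case (Suc j)
  have "{a # x | x a. x \<in> {v. length v = j + l \<and> drop j v \<in> B}} = {v. length v = Suc j + l \<and> drop (Suc j) v \<in> B}"
  proof (intro set_eqI iffI)
    fix v assume "v \<in> {v. length v = Suc j + l \<and> drop (Suc j) v \<in> B}"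
    then show "v \<in> {a # x | x a. x \<in> {v. length v = j + l \<and> drop j v \<in> B}}"
      by (cases v) auto
  qed auto
  with DS_cons[OF Suc.IH[OF Suc.prems]] show ?case by simp
qed

lemma Def_mem: "A \<in> S l \<Longrightarrow> length is = l \<Longrightarrow> \<forall>i\<in>set is. i < k \<Longrightarrow>
  Def S k (\<lambda>xs. map (nth xs) is \<in> A)"
proof -
  assume A: "A \<in> S l" and len: "length is = l" and idx: "\<forall>i\<in>set is. i < k"
  have T1: "Def S (k + l) (\<lambda>v. drop k v \<in> A)"
    unfolding Def_def using prepend_S[OF A, of k] by simp
  have T2: "Def S (k + l) (\<lambda>v. \<forall>j<l. v!(k+j) = v!(is!j))"
  proof (rule Def_all_idx)
    fix j assume "j < l"
    then have "k + j < k + l" "is!j < k + l" using idx len by (auto simp: trans_less_add1)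
    then show "Def S (k + l) (\<lambda>v. v!(k+j) = v!(is!j))"
      unfolding Def_def using DS_diag by blast
  qed
  from Def_exs[OF Def_and[OF T1 T2]]
  show ?thesis
  proof (rule Def_cong)
    fix xs :: "'a list" assume lx: "length xs = k"
    show "(\<exists>ys. length ys = l \<and> drop k (xs @ ys) \<in> A \<and> (\<forall>j<l. (xs @ ys) ! (k + j) = (xs @ ys) ! (is ! j)))
          = (map (nth xs) is \<in> A)"
    proof
      assume "\<exists>ys. length ys = l \<and> drop k (xs @ ys) \<in> A \<and> (\<forall>j<l. (xs @ ys) ! (k + j) = (xs @ ys) ! (is ! j))"
      then obtain ys where ys: "length ys = l" "ys \<in> A" "\<forall>j<l. ys ! j = xs ! (is ! j)"
        using lx idx len by (auto simp: nth_append)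
      have "ys = map (nth xs) is" using ys len by (intro nth_equalityI) auto
      then show "map (nth xs) is \<in> A" using ys by simp
    next
      assume "map (nth xs) is \<in> A"
      then show "\<exists>ys. length ys = l \<and> drop k (xs @ ys) \<in> A \<and> (\<forall>j<l. (xs @ ys) ! (k + j) = (xs @ ys) ! (is ! j))"
        using lx idx len by (intro exI[of _ "map (nth xs) is"]) (auto simp: nth_append)
    qed
  qed
qed

lemma Def_subst: "Def S l \<phi> \<Longrightarrow> length is = l \<Longrightarrow> \<forall>i\<in>set is. i < k \<Longrightarrow>
  Def S k (\<lambda>xs. \<phi> (map (nth xs) is))"
proof -
  assume a: "Def S l \<phi>" "length is = l" "\<forall>i\<in>set is. i < k"
  from Def_mem[OF a(1)[unfolded Def_def] a(2,3)]
  show ?thesis by (rule Def_cong) (use a(2) in auto)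
qed

lemma len2_conv: "length xs = 2 \<longleftrightarrow> (\<exists>a b. xs = [a, b])"
  by (auto simp: numeral_2_eq_2 length_Suc_conv)

lemma len3_conv: "length xs = 3 \<longleftrightarrow> (\<exists>a b c. xs = [a, b, c])"
  by (auto simp: numeral_3_eq_3 length_Suc_conv)

lemma Def_lt2: "Def S 2 (\<lambda>v. v!0 < v!1)"
proof -
  have eq: "{[x, y] | x y. x < y} = {xs. length xs = 2 \<and> xs!0 < xs!1}"
    by (auto simp: len2_conv)
  show ?thesis by (simp only: Def_def eq[symmetric] DS_lt)
qed

lemma Def_add3: "Def S 3 (\<lambda>v. v!2 = v!0 + v!1)"
proof -
  have eq: "{[x, y, z] | x y z. z = x + y} = {xs. length xs = 3 \<and> xs!2 = xs!0 + xs!1}"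
    by (auto simp: len3_conv numeral_2_eq_2)
  show ?thesis by (simp only: Def_def eq[symmetric] DS_add)
qed

lemma Def_c1: "Def S 1 (\<lambda>v. v!0 = c)"
proof -
  have eq: "{[c]} = {xs. length xs = 1 \<and> xs!0 = c}"
    by (auto simp: length_Suc_conv)
  show ?thesis by (simp only: Def_def eq[symmetric] DS_const[of c])
qed

lemma Def_eq: "i < k \<Longrightarrow> j < k \<Longrightarrow> Def S k (\<lambda>xs. xs!i = xs!j)"
  unfolding Def_def using DS_diag by blast

lemma Def_lt: "i < k \<Longrightarrow> j < k \<Longrightarrow> Def S k (\<lambda>xs. xs!i < xs!j)"
  using Def_subst[OF Def_lt2, of "[i,j]" k] by simp

lemma Def_le: "i < k \<Longrightarrow> j < k \<Longrightarrow> Def S k (\<lambda>xs. xs!i \<le> xs!j)"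
  using Def_not[OF Def_lt[of j k i]] by (simp add: not_less)

lemma Def_addk: "i < k \<Longrightarrow> j < k \<Longrightarrow> l < k \<Longrightarrow> Def S k (\<lambda>xs. xs!l = xs!i + xs!j)"
  using Def_subst[OF Def_add3, of "[i,j,l]" k] by (simp add: numeral_2_eq_2)

lemma Def_eqc: "i < k \<Longrightarrow> Def S k (\<lambda>xs. xs!i = c)"
  using Def_subst[OF Def_c1[of c], of "[i]" k] by simp

lemma Def_const_elim: "Def S (Suc k) \<psi> \<Longrightarrow> (\<And>xs. length xs = k \<Longrightarrow> \<phi> xs = \<psi> (xs @ [c])) \<Longrightarrow> Def S k \<phi>"
proof -
  assume a: "Def S (Suc k) \<psi>" and b: "\<And>xs. length xs = k \<Longrightarrow> \<phi> xs = \<psi> (xs @ [c])"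
  from Def_ex[OF Def_and[OF Def_eqc[of k "Suc k" c, OF lessI] a]]
  show ?thesis
  proof (rule Def_cong)
    fix xs :: "'a list" assume l: "length xs = k"
    then have "\<And>a. (xs @ [a]) ! k = a" by (simp add: nth_append)
    then show "(\<exists>a. (xs @ [a]) ! k = c \<and> \<psi> (xs @ [a])) = \<phi> xs" using b[OF l] by simp
  qed
qed

lemma Def_lt_add: "i < k \<Longrightarrow> j < k \<Longrightarrow> l < k \<Longrightarrow> Def S k (\<lambda>xs. xs!i < xs!j + xs!l)"
proof -
  assume "i < k" "j < k" "l < k"
  then have "Def S (Suc k) (\<lambda>v. v!k = v!j + v!l \<and> v!i < v!k)"
    by (intro Def_and Def_addk Def_lt) auto
  from Def_ex[OF this] show ?thesis
    by (rule Def_cong) (use \<open>i < k\<close> \<open>j < k\<close> \<open>l < k\<close> in \<open>auto simp: nth_append\<close>)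
qed

lemma Def_gabs_lt: "i < k \<Longrightarrow> j < k \<Longrightarrow> l < k \<Longrightarrow> Def S k (\<lambda>xs. gabs (xs!i - xs!j) < xs!l)"
proof -
  assume "i < k" "j < k" "l < k"
  then have "Def S k (\<lambda>xs. xs!i < xs!l + xs!j \<and> xs!j < xs!l + xs!i)"
    by (intro Def_and Def_lt_add) auto
  then show ?thesis by (rule Def_cong) (simp add: gabs_diff_less)
qed

lemma Def_le_c: "i < k \<Longrightarrow> Def S k (\<lambda>xs. xs!i \<le> c)"
  by (rule Def_const_elim[OF Def_le[of i "Suc k" k], of _ c]) (auto simp: nth_append)

lemma Def_c_le: "i < k \<Longrightarrow> Def S k (\<lambda>xs. c \<le> xs!i)"
  by (rule Def_const_elim[OF Def_le[of k "Suc k" i], of _ c]) (auto simp: nth_append)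

lemma Def_pos: "i < k \<Longrightarrow> Def S k (\<lambda>xs. 0 < xs!i)"
  by (rule Def_const_elim[OF Def_lt[of k "Suc k" i], of _ 0]) (auto simp: nth_append)

end


lemma halve:
  assumes dense: "\<forall>a::'a::linordered_ab_group_add. 0 < a \<longrightarrow> (\<exists>b. 0 < b \<and> b < a)" and a: "0 < (a::'a)"
  shows "\<exists>b>0. b + b \<le> a"
proof -
  obtain c where c: "0 < c" "c < a" using dense a by blast
  show ?thesis
  proof (cases "c + c \<le> a")
    case True then show ?thesis using c by blast
  next
    case False
    then have "a < c + c" by simp
    then have "(a - c) + (a - c) \<le> a" by (simp add: algebra_simps)
    moreover have "0 < a - c" using c by simp
    ultimately show ?thesis by blast
  qed
qed

lemma gabs_zero: "gabs (x::'a::linordered_ab_group_add) \<le> 0 \<Longrightarrow> x = 0"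
proof -
  assume "gabs x \<le> 0"
  then have "x \<le> 0" "0 \<le> x" by (auto simp: gabs_le)
  then show ?thesis by (rule antisym)
qed

lemma map_nth_upt_gen: "a + l \<le> length u \<Longrightarrow> map (nth u) [a..<a+l] = take l (drop a u)"
  by (rule nth_equalityI) auto

definition lbox :: "nat \<Rightarrow> ('a::linordered_ab_group_add) \<Rightarrow> 'a list set" where
  "lbox m K = {z. length z = m \<and> (\<forall>i<m. -K \<le> z!i \<and> z!i \<le> K)}"

section \<open>One-dimensional Lebesgue lemma\<close>

context
  fixes S :: "nat \<Rightarrow> ('a::linordered_ab_group_add) list set set"
  assumes DS: "definable_structure S" and DC: "definably_complete S"
begin

lemma L1:
  fixes Q1 :: "'a \<Rightarrow> 'a \<Rightarrow> bool" and K :: 'a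
  assumes dense: "\<forall>a::'a. 0 < a \<longrightarrow> (\<exists>b. 0 < b \<and> b < a)"
    and QD: "Def S 2 (\<lambda>v. Q1 (v!0) (v!1))"
    and mono: "\<forall>y r r'. 0 < r' \<longrightarrow> r' \<le> r \<longrightarrow> Q1 y r \<longrightarrow> Q1 y r'"
    and K: "0 \<le> K"
    and loc: "\<forall>x. -K \<le> x \<longrightarrow> x \<le> K \<longrightarrow> (\<exists>r>0. \<forall>y. -K \<le> y \<longrightarrow> y \<le> K \<longrightarrow> gabs (x - y) < r \<longrightarrow> Q1 y r)"
  shows "\<exists>r>0. \<forall>y. -K \<le> y \<longrightarrow> y \<le> K \<longrightarrow> Q1 y r"
proof -
  define \<phi> where "\<phi> t \<longleftrightarrow> -K \<le> t \<and> t \<le> K \<and> (\<exists>r>0. \<forall>y. -K \<le> y \<longrightarrow> y \<le> t \<longrightarrow> Q1 y r)" for t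
  have D3: "Def S 3 (\<lambda>u. (-K \<le> u!2 \<and> u!2 \<le> u!0) \<longrightarrow> Q1 (u!2) (u!1))"
  proof (intro Def_imp[OF DS] Def_and[OF DS])
    show "Def S 3 (\<lambda>u. - K \<le> u ! 2)" by (rule Def_c_le[OF DS]) simp
    show "Def S 3 (\<lambda>u. u ! 2 \<le> u ! 0)" by (rule Def_le[OF DS]) auto
    show "Def S 3 (\<lambda>u. Q1 (u ! 2) (u ! 1))"
      using Def_subst[OF DS QD, of "[2,1]" 3] by simp
  qed
  have D2: "Def S 2 (\<lambda>v. 0 < v!1 \<and> (\<forall>y. -K \<le> y \<longrightarrow> y \<le> v!0 \<longrightarrow> Q1 y (v!1)))"
  proof (rule Def_and[OF DS])
    show "Def S 2 (\<lambda>v. 0 < v ! 1)" by (rule Def_pos[OF DS]) simp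
    have "Def S 2 (\<lambda>v. \<forall>a. (-K \<le> (v@[a])!2 \<and> (v@[a])!2 \<le> (v@[a])!0) \<longrightarrow> Q1 ((v@[a])!2) ((v@[a])!1))"
      using Def_all[OF DS, of 2] D3 by (simp add: numeral_3_eq_3 del: One_nat_def)
    then show "Def S 2 (\<lambda>v. \<forall>y. - K \<le> y \<longrightarrow> y \<le> v ! 0 \<longrightarrow> Q1 y (v ! 1))"
      by (rule Def_cong[OF DS]) (auto simp: nth_append)
  qed
  have D1: "Def S 1 (\<lambda>v. \<phi> (v!0))"
  proof -
    have "Def S 1 (\<lambda>v. \<exists>a. 0 < (v@[a])!1 \<and> (\<forall>y. -K \<le> y \<longrightarrow> y \<le> (v@[a])!0 \<longrightarrow> Q1 y ((v@[a])!1)))"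
      using Def_ex[OF DS, of 1] D2 by (simp add: numeral_2_eq_2)
    then have "Def S 1 (\<lambda>v. \<exists>r>0. \<forall>y. -K \<le> y \<longrightarrow> y \<le> v!0 \<longrightarrow> Q1 y r)"
      by (rule Def_cong[OF DS]) (auto simp: nth_append)
    moreover have "Def S 1 (\<lambda>v. -K \<le> v!0)" "Def S 1 (\<lambda>v. v!0 \<le> K)"
      by (rule Def_c_le[OF DS], simp) (rule Def_le_c[OF DS], simp)
    ultimately show ?thesis unfolding \<phi>_def by (intro Def_and[OF DS]) auto
  qed
  then have X: "{xs. length xs = 1 \<and> \<phi> (xs!0)} \<in> S 1" unfolding Def_def .
  have X': "{x. [x] \<in> {xs. length xs = 1 \<and> \<phi> (xs!0)}} = {x. \<phi> x}" by auto
  obtain r0 where r0: "r0 > 0" "\<forall>y. -K \<le> y \<longrightarrow> y \<le> K \<longrightarrow> gabs (-K - y) < r0 \<longrightarrow> Q1 y r0"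
  proof -
    have "-K \<le> K" using K by (meson neg_le_0_iff_le order_trans)
    then show ?thesis using loc that by blast
  qed
  have "\<phi> (-K)" unfolding \<phi>_def
  proof (intro conjI exI[of _ r0])
    show "\<forall>y. - K \<le> y \<longrightarrow> y \<le> - K \<longrightarrow> Q1 y r0"
    proof (intro allI impI)
      fix y assume "-K \<le> y" "y \<le> -K"
      then have "y = -K" by simp
      moreover have "gabs (-K - y) < r0" using \<open>y = -K\<close> r0(1) by (simp add: gabs_def)
      ultimately show "Q1 y r0" using r0 K by auto
    qed
  qed (use r0 K in auto)
  then have ne: "{x. \<phi> x} \<noteq> {}" by auto
  have bd: "\<forall>x\<in>{x. \<phi> x}. x \<le> K" unfolding \<phi>_def by auto
  have "{x. \<phi> x} \<noteq> {} \<and> (\<exists>u. \<forall>x\<in>{x. \<phi> x}. x \<le> u) \<longrightarrow>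
           (\<exists>s. (\<forall>x\<in>{x. \<phi> x}. x \<le> s) \<and> (\<forall>u. (\<forall>x\<in>{x. \<phi> x}. x \<le> u) \<longrightarrow> s \<le> u))"
    using DC[unfolded definably_complete_def, rule_format, OF X] unfolding Let_def X' by (rule conjunct1)
  then obtain s where s1: "\<forall>x\<in>{x. \<phi> x}. x \<le> s" and s2: "\<forall>u. (\<forall>x\<in>{x. \<phi> x}. x \<le> u) \<longrightarrow> s \<le> u"
    using ne bd by blast
  have sK: "s \<le> K" using s2 bd by blast
  have sK': "-K \<le> s" using s1 \<open>\<phi> (-K)\<close> by blast
  obtain r0 where r0: "r0 > 0" "\<forall>y. -K \<le> y \<longrightarrow> y \<le> K \<longrightarrow> gabs (s - y) < r0 \<longrightarrow> Q1 y r0"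
    using loc sK sK' by blast
  obtain t where t: "\<phi> t" "s - r0 < t"
  proof -
    have "\<not> (\<forall>x\<in>{x. \<phi> x}. x \<le> s - r0)"
    proof
      assume "\<forall>x\<in>{x. \<phi> x}. x \<le> s - r0"
      then have "s \<le> s - r0" using s2 by blast
      then show False using r0(1) by (simp add: le_diff_eq)
    qed
    then show ?thesis using that by (auto simp: not_le)
  qed
  obtain r1 where r1: "r1 > 0" "\<forall>y. -K \<le> y \<longrightarrow> y \<le> t \<longrightarrow> Q1 y r1" "t \<le> K"
    using t(1) unfolding \<phi>_def by blast
  define r2 where "r2 = min r0 r1"
  have r2: "0 < r2" "r2 \<le> r0" "r2 \<le> r1" using r0 r1 unfolding r2_def by auto
  have claim: "\<phi> t'" if "t' \<le> K" "t' < s + r0" "-K \<le> t'" for t'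
    unfolding \<phi>_def
  proof (intro conjI exI[of _ r2])
    show "\<forall>y. - K \<le> y \<longrightarrow> y \<le> t' \<longrightarrow> Q1 y r2"
    proof (intro allI impI)
      fix y assume y: "-K \<le> y" "y \<le> t'"
      show "Q1 y r2"
      proof (cases "y \<le> t")
        case True
        then show ?thesis using r1 r2 y mono by blast
      next
        case False
        then have "s - r0 < y" using t(2) by simp
        then have a: "s < r0 + y" by (simp add: diff_less_eq add.commute)
        have b: "y < r0 + s" using y that by (simp add: add.commute)
        have "gabs (s - y) < r0" using a b by (simp add: gabs_diff_less)
        then have "Q1 y r0" using r0 y that by auto
        then show ?thesis using r2 mono by blast
      qed
    qed
  qed (use that r2 in auto)
  have "s = K"
  proof (rule ccontr)
    assume "s \<noteq> K"
    then have "s < K" using sK by simp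
    obtain b where b: "0 < b" "b < r0" using dense r0(1) by blast
    define t' where "t' = min (s + b) K"
    have "s < t'" using b \<open>s < K\<close> unfolding t'_def by (simp add: less_add_same_cancel1)
    moreover have "\<phi> t'"
    proof (rule claim)
      have sb: "s < s + b" "s + b < s + r0" using b by (simp_all add: less_add_same_cancel1)
      show "t' \<le> K" unfolding t'_def by simp
      show "t' < s + r0" unfolding t'_def using sb by (simp add: min_less_iff_disj)
      show "- K \<le> t'" using \<open>s < t'\<close> sK' by simp
    qed
    ultimately show False using s1 by (simp add: not_le[symmetric])
  qed
  have "\<phi> K" by (rule claim) (use \<open>s = K\<close> r0 K in \<open>auto simp: less_add_same_cancel1\<close>)
  then show ?thesis unfolding \<phi>_def by auto
qed


lemma lbox_Cons: "w # z \<in> lbox (Suc m) K \<longleftrightarrow> -K \<le> w \<and> w \<le> K \<and> z \<in> lbox m K"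
  unfolding lbox_def by (auto simp: less_Suc_eq_0_disj)

lemma map_nth_upt_take: "m \<le> length u \<Longrightarrow> map (nth u) [0..<m] = take m u"
  by (rule nth_equalityI) auto

lemma map_nth_upt_drop: "map (nth u) [a..<length u] = drop a u"
  by (rule nth_equalityI) auto

lemma BL:
  fixes K :: 'a
  assumes dense: "\<forall>a::'a. 0 < a \<longrightarrow> (\<exists>b. 0 < b \<and> b < a)"
    and K: "0 \<le> K"
  shows "\<forall>Q. Def S (Suc m) (\<lambda>v. Q (butlast v) (last v))
     \<longrightarrow> (\<forall>y r r'. 0 < r' \<longrightarrow> r' \<le> r \<longrightarrow> Q y r \<longrightarrow> Q y r')
     \<longrightarrow> (\<forall>x\<in>lbox m K. \<exists>r>0. \<forall>y\<in>lbox m K. ldist x y < r \<longrightarrow> Q y r)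
     \<longrightarrow> (\<exists>r>0. \<forall>y\<in>lbox m K. Q y r)"
proof (induction m)
  case 0
  have b0: "lbox 0 K = {[]}" unfolding lbox_def by auto
  show ?case
  proof (intro allI impI)
    fix Q :: "'a list \<Rightarrow> 'a \<Rightarrow> bool"
    assume "\<forall>x\<in>lbox 0 K. \<exists>r>0. \<forall>y\<in>lbox 0 K. ldist x y < r \<longrightarrow> Q y r"
    then obtain r where "r > 0" "ldist [] [] < r \<longrightarrow> Q [] r" unfolding b0 by auto
    moreover have "ldist [] [] < r" using \<open>r > 0\<close> by (simp add: ldist_less)
    ultimately show "\<exists>r>0. \<forall>y\<in>lbox 0 K. Q y r" unfolding b0 by auto
  qed
next
  case (Suc m)
  show ?case
  proof (intro allI impI)
    fix Q :: "'a list \<Rightarrow> 'a \<Rightarrow> bool"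
    assume QD: "Def S (Suc (Suc m)) (\<lambda>v. Q (butlast v) (last v))"
      and mono: "\<forall>y r r'. 0 < r' \<longrightarrow> r' \<le> r \<longrightarrow> Q y r \<longrightarrow> Q y r'"
      and loc: "\<forall>x\<in>lbox (Suc m) K. \<exists>r>0. \<forall>y\<in>lbox (Suc m) K. ldist x y < r \<longrightarrow> Q y r"
    have Qsub: "Def S (Suc (Suc m)) (\<lambda>u. Q (u!(Suc m) # take m u) (u!m))"
    proof -
      have "Def S (Suc (Suc m)) (\<lambda>u. (\<lambda>v. Q (butlast v) (last v)) (map (nth u) (Suc m # [0..<m] @ [m])))"
        by (rule Def_subst[OF DS QD]) auto
      then show ?thesis by (rule Def_cong[OF DS]) (simp add: map_nth_upt_take)
    qed
    have step: "\<exists>r>0. \<forall>z\<in>lbox m K. \<forall>w. -K \<le> w \<longrightarrow> w \<le> K \<longrightarrow> gabs (w0 - w) < r \<longrightarrow> Q (w # z) r"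
      if w0: "-K \<le> w0" "w0 \<le> K" for w0
    proof -
      define Qw where "Qw z r \<longleftrightarrow> (\<forall>w. -K \<le> w \<longrightarrow> w \<le> K \<longrightarrow> gabs (w0 - w) < r \<longrightarrow> Q (w # z) r)" for z r
      have D: "Def S (Suc m) (\<lambda>v. Qw (butlast v) (last v))"
      proof -
        have "Def S (Suc (Suc m)) (\<lambda>u. (-K \<le> u!(Suc m) \<and> u!(Suc m) \<le> K \<and> gabs (w0 - u!(Suc m)) < u!m)
                  \<longrightarrow> Q (u!(Suc m) # take m u) (u!m))"
        proof (intro Def_imp[OF DS] Def_and[OF DS] Qsub)
          show "Def S (Suc (Suc m)) (\<lambda>u. - K \<le> u ! Suc m)" by (rule Def_c_le[OF DS]) simp
          show "Def S (Suc (Suc m)) (\<lambda>u. u ! Suc m \<le> K)" by (rule Def_le_c[OF DS]) simp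
          show "Def S (Suc (Suc m)) (\<lambda>u. gabs (w0 - u ! Suc m) < u ! m)"
            by (rule Def_const_elim[OF DS Def_gabs_lt[OF DS, of "Suc (Suc m)" "Suc (Suc (Suc m))" "Suc m" m], of _ w0])
               (auto simp: nth_append)
        qed
        from Def_all[OF DS this] show ?thesis
        proof (rule Def_cong[OF DS])
          fix v :: "'a list" assume lv: "length v = Suc m"
          then have e: "\<And>a. (v @ [a]) ! Suc m = a" "\<And>a. (v @ [a]) ! m = last v" "\<And>a. take m (v @ [a]) = butlast v"
          proof -
            have "v \<noteq> []" using lv by auto
            then show "\<And>a. (v @ [a]) ! Suc m = a" "\<And>a. (v @ [a]) ! m = last v" "\<And>a. take m (v @ [a]) = butlast v"
              using last_conv_nth[of v] lv by (auto simp: nth_append butlast_conv_take)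
          qed
          show "(\<forall>a. - K \<le> (v @ [a]) ! Suc m \<and> (v @ [a]) ! Suc m \<le> K \<and> gabs (w0 - (v @ [a]) ! Suc m) < (v @ [a]) ! m \<longrightarrow>
                Q ((v @ [a]) ! Suc m # take m (v @ [a])) ((v @ [a]) ! m)) = Qw (butlast v) (last v)"
            unfolding e Qw_def by blast
        qed
      qed
      have M: "\<forall>y r r'. 0 < r' \<longrightarrow> r' \<le> r \<longrightarrow> Qw y r \<longrightarrow> Qw y r'"
        unfolding Qw_def using mono by (meson less_le_trans)
      have L: "\<forall>x\<in>lbox m K. \<exists>r>0. \<forall>y\<in>lbox m K. ldist x y < r \<longrightarrow> Qw y r"
      proof
        fix z0 assume z0: "z0 \<in> lbox m K"
        then have "w0 # z0 \<in> lbox (Suc m) K" using w0 by (simp add: lbox_Cons)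
        then obtain r where r: "r > 0" "\<forall>y\<in>lbox (Suc m) K. ldist (w0 # z0) y < r \<longrightarrow> Q y r"
          using loc by blast
        have "\<forall>y\<in>lbox m K. ldist z0 y < r \<longrightarrow> Qw y r"
          unfolding Qw_def
        proof (intro ballI impI allI)
          fix z w assume z: "z \<in> lbox m K" "ldist z0 z < r" and w: "-K \<le> w" "w \<le> K" "gabs (w0 - w) < r"
          have "length z0 = length z" using z0 z unfolding lbox_def by auto
          then have "ldist (w0 # z0) (w # z) < r" using z w by (simp add: ldist_cons_less)
          moreover have "w # z \<in> lbox (Suc m) K" using z w by (simp add: lbox_Cons)
          ultimately show "Q (w # z) r" using r by blast
        qed
        then show "\<exists>r>0. \<forall>y\<in>lbox m K. ldist z0 y < r \<longrightarrow> Qw y r" using r by blast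
      qed
      have "\<exists>r>0. \<forall>y\<in>lbox m K. Qw y r" using Suc.IH D M L by blast
      then show ?thesis unfolding Qw_def by blast
    qed
    define Q1 where "Q1 w r \<longleftrightarrow> (\<forall>z\<in>lbox m K. Q (w # z) r)" for w r
    have D1: "Def S 2 (\<lambda>v. Q1 (v!0) (v!1))"
    proof -
      have "Def S (2 + m) (\<lambda>u. (\<forall>i<m. -K \<le> u!(2+i) \<and> u!(2+i) \<le> K) \<longrightarrow> Q (u!0 # drop 2 u) (u!1))"
      proof (intro Def_imp[OF DS] Def_all_idx[OF DS] Def_and[OF DS])
        fix i assume "i < m"
        then show "Def S (2 + m) (\<lambda>u. - K \<le> u ! (2 + i))" "Def S (2 + m) (\<lambda>u. u ! (2 + i) \<le> K)"
          by (auto intro: Def_c_le[OF DS] Def_le_c[OF DS])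
      next
        have "Def S (2 + m) (\<lambda>u. (\<lambda>v. Q (butlast v) (last v)) (map (nth u) (0 # [2..<2+m] @ [1])))"
          by (rule Def_subst[OF DS QD]) auto
        then show "Def S (2 + m) (\<lambda>u. Q (u ! 0 # drop 2 u) (u ! 1))"
        proof (rule Def_cong[OF DS])
          fix u :: "'a list" assume "length u = 2 + m"
          then have "map (nth u) [2..<2+m] = drop 2 u" using map_nth_upt_drop[of u 2] by simp
          then show "(\<lambda>v. Q (butlast v) (last v)) (map (nth u) (0 # [2..<2+m] @ [1])) = Q (u ! 0 # drop 2 u) (u ! 1)"
            by simp
        qed
      qed
      from Def_alls[OF DS this] show ?thesis
      proof (rule Def_cong[OF DS])
        fix v :: "'a list" assume lv: "length v = 2"
        then have e: "\<And>ys i. (v @ ys) ! (2 + i) = ys ! i" "\<And>ys. drop 2 (v @ ys) = ys"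
          "\<And>ys. (v @ ys) ! 0 = v ! 0" "\<And>ys. (v @ ys) ! 1 = v ! 1"
          by (auto simp: nth_append)
        show "(\<forall>ys. length ys = m \<longrightarrow> (\<forall>i<m. - K \<le> (v @ ys) ! (2 + i) \<and> (v @ ys) ! (2 + i) \<le> K) \<longrightarrow>
              Q ((v @ ys) ! 0 # drop 2 (v @ ys)) ((v @ ys) ! 1)) = Q1 (v ! 0) (v ! 1)"
          unfolding e Q1_def lbox_def by auto
      qed
    qed
    have M1: "\<forall>y r r'. 0 < r' \<longrightarrow> r' \<le> r \<longrightarrow> Q1 y r \<longrightarrow> Q1 y r'"
      unfolding Q1_def using mono by blast
    have L1': "\<forall>x. -K \<le> x \<longrightarrow> x \<le> K \<longrightarrow> (\<exists>r>0. \<forall>y. -K \<le> y \<longrightarrow> y \<le> K \<longrightarrow> gabs (x - y) < r \<longrightarrow> Q1 y r)"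
      unfolding Q1_def using step by blast
    obtain r where r: "r > 0" "\<forall>y. -K \<le> y \<longrightarrow> y \<le> K \<longrightarrow> Q1 y r"
      using L1[OF dense D1 M1 K L1'] by blast
    have "\<forall>y\<in>lbox (Suc m) K. Q y r"
    proof
      fix y assume y: "y \<in> lbox (Suc m) K"
      then obtain w z where "y = w # z" unfolding lbox_def by (cases y) auto
      then show "Q y r" using y r unfolding Q1_def by (auto simp: lbox_Cons)
    qed
    then show "\<exists>r>0. \<forall>y\<in>lbox (Suc m) K. Q y r" using r by blast
  qed
qed

end

theorem mainTheorem5:
  fixes S :: "nat \<Rightarrow> ('a::linordered_ab_group_add) list set set"
    and C P :: "'a list set" and f :: "'a list \<Rightarrow> 'a list \<Rightarrow> 'a" and m n :: nat
  assumes "definable_structure S"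
    and "definably_complete S"
    and "locally_o_minimal S"
    and "C \<in> S m" and "P \<in> S n"
    and "closed_in_power m C" and "bounded_in_power C"
    and "{x @ p @ [f x p] | x p. x \<in> C \<and> p \<in> P} \<in> S (m + n + 1)"
  shows "equi_continuous C P f \<longleftrightarrow> uniformly_equi_continuous C P f"
proof
  assume "uniformly_equi_continuous C P f"
  then show "equi_continuous C P f"
    unfolding uniformly_equi_continuous_def equi_continuous_def by metis
next
  assume EC: "equi_continuous C P f"
  note DS = assms(1) and DC = assms(2) and CS = assms(4) and PS = assms(5)
  have lenC: "\<And>x. x \<in> C \<Longrightarrow> length x = m" using DS_len[OF DS CS] by blast
  have lenP: "\<And>p. p \<in> P \<Longrightarrow> length p = n" using DS_len[OF DS PS] by blast
  show "uniformly_equi_continuous C P f"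
    unfolding uniformly_equi_continuous_def
  proof (intro allI impI)
    fix e :: 'a assume e: "0 < e"
    show "\<exists>d>0. \<forall>p\<in>P. \<forall>x\<in>C. \<forall>x'\<in>C. ldist x x' < d \<longrightarrow> gabs (f x p - f x' p) < e"
    proof (cases "\<forall>a::'a. 0 < a \<longrightarrow> (\<exists>b. 0 < b \<and> b < a)")
      case False
      then obtain u :: 'a where u: "0 < u" "\<forall>b. 0 < b \<longrightarrow> \<not> b < u" by blast
      have "\<forall>p\<in>P. \<forall>x\<in>C. \<forall>x'\<in>C. ldist x x' < u \<longrightarrow> gabs (f x p - f x' p) < e"
      proof (intro ballI impI)
        fix p x x' assume xx: "p \<in> P" "x \<in> C" "x' \<in> C" "ldist x x' < u"
        have l: "length x = length x'" using xx lenC by auto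
        have "x = x'"
        proof (rule nth_equalityI[OF l])
          fix i assume i: "i < length x"
          have "gabs (x!i - x'!i) < u" using ldist_ge[OF l i] xx(4) by (rule le_less_trans)
          then have "gabs (x!i - x'!i) \<le> 0" using u gabs_nonneg[of "x!i - x'!i"] by (meson not_le)
          then show "x!i = x'!i" using gabs_zero by fastforce
        qed
        then show "gabs (f x p - f x' p) < e" using e by (simp add: gabs_def)
      qed
      then show ?thesis using u by blast
    next
      case True
      note dense = True
      obtain e1 where e1: "0 < e1" "e1 + e1 \<le> e" using halve[OF dense e] by blast
      obtain B where B: "\<forall>x\<in>C. lnorm x \<le> B" using assms(7) unfolding bounded_in_power_def by blast
      define K where "K = max B 0"
      have K: "0 \<le> K" unfolding K_def by simp
      have Cbox: "C \<subseteq> lbox m K"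
      proof
        fix x assume x: "x \<in> C"
        have "\<forall>i<m. -K \<le> x!i \<and> x!i \<le> K"
        proof (intro allI impI)
          fix i assume "i < m"
          then have "gabs (x!i) \<le> K" using lnorm_ge[of i x] B x lenC[OF x] unfolding K_def
            by (meson max.coboundedI1 order_trans)
          then show "-K \<le> x!i \<and> x!i \<le> K" by (auto simp: gabs_le minus_le_iff)
        qed
        then show "x \<in> lbox m K" using lenC[OF x] unfolding lbox_def by auto
      qed
      define G where "G = {x @ p @ [f x p] | x p. x \<in> C \<and> p \<in> P}"
      have GS: "G \<in> S (m + n + 1)" using assms(8) unfolding G_def .
      have Gmem: "y @ p @ [a] \<in> G \<longleftrightarrow> y \<in> C \<and> p \<in> P \<and> a = f y p"
        if "length y = m" "length p = n" for y p a
      proof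
        assume "y @ p @ [a] \<in> G"
        then obtain x q where xq: "x \<in> C" "q \<in> P" "y @ p @ [a] = x @ q @ [f x q]" unfolding G_def by blast
        have "length y = length x" using xq lenC that by auto
        then have 1: "y = x" "p @ [a] = q @ [f x q]" using xq(3) by auto
        have "length p = length q" using xq lenP that by auto
        then have "p = q" "a = f x q" using 1(2) by auto
        then show "y \<in> C \<and> p \<in> P \<and> a = f y p" using 1 xq by simp
      qed (auto simp: G_def)
      define Q where "Q y r \<longleftrightarrow> (y \<in> C \<longrightarrow> (\<forall>p\<in>P. \<forall>x'\<in>C. ldist y x' < r \<longrightarrow> gabs (f y p - f x' p) < e))" for y r
      define Q2 where "Q2 y r \<longleftrightarrow> (\<forall>p. length p = n \<longrightarrow> (\<forall>x'. length x' = m \<longrightarrow> (\<forall>a b.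
          y @ p @ [a] \<in> G \<longrightarrow> x' @ p @ [b] \<in> G \<longrightarrow> (0 < r \<and> (\<forall>i<m. gabs (y!i - x'!i) < r)) \<longrightarrow> gabs (a - b) < e)))" for y r
      have QQ2: "Q y r = Q2 y r" if "length y = m" for y r
        unfolding Q_def Q2_def using that lenC lenP
        by (auto simp: Gmem ldist_less)
      have DQ2: "Def S (Suc m) (\<lambda>v. Q2 (butlast v) (last v))"
      proof -
        define N where "N = Suc m + n + m"
        define psi where "psi u \<longleftrightarrow>
          (map (nth u) ([0..<m] @ [Suc m..<Suc m+n] @ [N]) \<in> G \<longrightarrow>
           map (nth u) ([Suc m+n..<N] @ [Suc m..<Suc m+n] @ [Suc N]) \<in> G \<longrightarrow>
           (0 < u!m \<and> (\<forall>i<m. gabs (u!i - u!(Suc m+n+i)) < u!m)) \<longrightarrow> gabs (u!N - u!(Suc N)) < e)" for u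
        have A0: "Def S (Suc (Suc N)) psi"
          unfolding psi_def
        proof (intro Def_imp[OF DS] Def_and[OF DS] Def_all_idx[OF DS])
          show "Def S (Suc (Suc N)) (\<lambda>u. map (nth u) ([0..<m] @ [Suc m..<Suc m + n] @ [N]) \<in> G)"
            by (rule Def_mem[OF DS GS]) (auto simp: N_def)
          show "Def S (Suc (Suc N)) (\<lambda>u. map (nth u) ([Suc m + n..<N] @ [Suc m..<Suc m + n] @ [Suc N]) \<in> G)"
            by (rule Def_mem[OF DS GS]) (auto simp: N_def)
          show "Def S (Suc (Suc N)) (\<lambda>u. 0 < u ! m)"
            by (rule Def_pos[OF DS]) (simp add: N_def)
          show "\<And>i. i < m \<Longrightarrow> Def S (Suc (Suc N)) (\<lambda>u. gabs (u ! i - u ! (Suc m + n + i)) < u ! m)"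
            by (rule Def_gabs_lt[OF DS]) (auto simp: N_def)
          show "Def S (Suc (Suc N)) (\<lambda>u. gabs (u ! N - u ! Suc N) < e)"
            by (rule Def_const_elim[OF DS Def_gabs_lt[OF DS, of N "Suc (Suc (Suc N))" "Suc N" "Suc (Suc N)"], of _ e])
               (auto simp: nth_append)
        qed
        have A1: "Def S N (\<lambda>w. \<forall>a b. psi ((w @ [a]) @ [b]))"
          using Def_all[OF DS Def_all[OF DS A0]] .
        have A2: "Def S (Suc m + n) (\<lambda>w. \<forall>x'. length x' = m \<longrightarrow> (\<forall>a b. psi (((w @ x') @ [a]) @ [b])))"
          using Def_alls[OF DS A1[unfolded N_def]] .
        have A3: "Def S (Suc m) (\<lambda>v. \<forall>p. length p = n \<longrightarrow> (\<forall>x'. length x' = m \<longrightarrow> (\<forall>a b. psi ((((v @ p) @ x') @ [a]) @ [b]))))"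
          using Def_alls[OF DS A2] .
        have psiU: "psi (y @ r # p @ x' @ [a, b]) \<longleftrightarrow>
            (y @ p @ [a] \<in> G \<longrightarrow> x' @ p @ [b] \<in> G \<longrightarrow> (0 < r \<and> (\<forall>i<m. gabs (y!i - x'!i) < r)) \<longrightarrow> gabs (a - b) < e)"
          if l: "length y = m" "length p = n" "length x' = m" for y r p x' a b
        proof -
          define U where "U = y @ r # p @ x' @ [a, b]"
          have lU: "length U = Suc (Suc N)" using l unfolding U_def N_def by simp
          have e1: "map (nth U) [0..<m] = y" using l lU map_nth_upt_gen[of 0 m U] unfolding N_def
            by (auto simp: U_def)
          have e2: "map (nth U) [Suc m..<Suc m+n] = p" using l lU map_nth_upt_gen[of "Suc m" n U] unfolding N_def
            by (auto simp: U_def)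
          have e3: "map (nth U) [Suc m+n..<N] = x'" using l lU map_nth_upt_gen[of "Suc m + n" m U] unfolding N_def
            by (auto simp: U_def)
          have e4: "U!N = a" "U!(Suc N) = b" "U!m = r" using l unfolding U_def N_def by (auto simp: nth_append)
          have e5: "\<And>i. i < m \<Longrightarrow> U!i = y!i" "\<And>i. i < m \<Longrightarrow> U!(Suc m+n+i) = x'!i"
            using l unfolding U_def by (auto simp: nth_append)
          show ?thesis unfolding U_def[symmetric] psi_def using e1 e2 e3 e4 e5 by auto
        qed
        from A3 show ?thesis
        proof (rule Def_cong[OF DS])
          fix v :: "'a list" assume lv: "length v = Suc m"
          then obtain y r where v: "v = y @ [r]" by (metis length_Suc_conv_rev)
          then have ly: "length y = m" using lv by simp
          show "(\<forall>p. length p = n \<longrightarrow> (\<forall>x'. length x' = m \<longrightarrow> (\<forall>a b. psi ((((v @ p) @ x') @ [a]) @ [b])))) =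
                Q2 (butlast v) (last v)"
            unfolding v Q2_def using psiU ly by simp
        qed
      qed
      have DQ: "Def S (Suc m) (\<lambda>v. Q (butlast v) (last v))"
        using DQ2 by (rule Def_cong[OF DS]) (simp add: QQ2)
      have mono: "\<forall>y r r'. 0 < r' \<longrightarrow> r' \<le> r \<longrightarrow> Q y r \<longrightarrow> Q y r'"
        unfolding Q_def by (meson less_le_trans)
      have loc: "\<forall>x\<in>lbox m K. \<exists>r>0. \<forall>y\<in>lbox m K. ldist x y < r \<longrightarrow> Q y r"
      proof
        fix x assume xb: "x \<in> lbox m K"
        then have lx: "length x = m" unfolding lbox_def by auto
        show "\<exists>r>0. \<forall>y\<in>lbox m K. ldist x y < r \<longrightarrow> Q y r"
        proof (cases "x \<in> C")
          case True
          obtain \<delta> where d: "\<delta> > 0" "\<forall>p\<in>P. \<forall>x'\<in>C. ldist x x' < \<delta> \<longrightarrow> gabs (f x p - f x' p) < e1"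
            using EC True e1(1) unfolding equi_continuous_def by blast
          obtain r where r: "0 < r" "r + r \<le> \<delta>" using halve[OF dense d(1)] by blast
          have rd: "r \<le> \<delta>" using r by (meson add_less_same_cancel1 le_less_trans less_le_not_le not_le)
          have "\<forall>y\<in>lbox m K. ldist x y < r \<longrightarrow> Q y r"
            unfolding Q_def
          proof (intro ballI impI)
            fix y p x' assume y: "y \<in> lbox m K" "ldist x y < r" "y \<in> C" and p: "p \<in> P" and x': "x' \<in> C" "ldist y x' < r"
            have ly: "length y = m" "length x' = m" using y x' lenC by auto
            have "ldist x x' < r + r" using ldist_tri[of x y x' r r] lx ly y x' by simp
            then have 1: "gabs (f x p - f x' p) < e1" using d p x' r by (meson order_less_le_trans)
            have 2: "gabs (f x p - f y p) < e1" using d p y rd by (meson order_less_le_trans)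
            have "gabs (f y p - f x' p) \<le> gabs (f y p - f x p) + gabs (f x p - f x' p)" by (rule gabs_tri)
            also have "\<dots> < e1 + e1" using 1 2 gabs_sym[of "f y p" "f x p"] by (simp add: add_strict_mono)
            also have "\<dots> \<le> e" by (rule e1(2))
            finally show "gabs (f y p - f x' p) < e" .
          qed
          then show ?thesis using r by blast
        next
          case False
          then obtain \<rho> where rho: "\<rho> > 0" "\<forall>y\<in>C. \<not> ldist x y < \<rho>"
            using assms(6) lx unfolding closed_in_power_def by blast
          then show ?thesis unfolding Q_def by blast
        qed
      qed
      obtain r where r: "r > 0" "\<forall>y\<in>lbox m K. Q y r"
        using BL[OF DS DC dense K, of m] DQ mono loc by blast
      then show ?thesis using Cbox unfolding Q_def by blast
    qed
  qed
qed

end
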